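(* Let $N\subset\mathbb{R}^3$ be an open set with coordinates $(t,x,y)$ and metric $g_f^{\varepsilon}=\varepsilon\,dx^2+f(x,y)\,dy^2+2\,dt\,dy$ ($\varepsilon=\pm1$, $f$ smooth), with orthonormal frame $$e_1=\partial_x,\quad e_2=\tfrac{2-f}{2\sqrt2}\partial_t+\tfrac1{\sqrt2}\partial_y,\quad e_3=\tfrac{2+f}{2\sqrt2}\partial_t-\tfrac1{\sqrt2}\partial_y,$$ so that $\langle e_1,e_1\rangle=\varepsilon$, $\langle e_2,e_2\rangle=1$, $\langle e_3,e_3\rangle=-1$. Let $\Sigma\subset N$ be a non-degenerate totally umbilical surface with unit normal $\mathcal{V}=v_1e_1+v_2e_2+v_3e_3$, where $v_i\in C^\infty(\Sigma)$ and $\varepsilon v_1^2+v_2^2-v_3^2=\delta=\pm1$, and assume $v_1\neq0$ on $\Sigma$. Let $\lambda\in C^\infty(\Sigma)$ satisfy $-\overline{\nabla}_T\mathcal{V}=\lambda T$ for all $T\in T\Sigma$, and let $\nabla\lambda$ denote the gradient of $\lambda$ on $\Sigma$ with respect to the induced metric. Then $$\langle\nabla\lambda,e_1\rangle=\delta\frac{f_{xx}v_1(v_2-v_3)^2}{4},$$ $$\langle\nabla\lambda,e_2\rangle=\delta\frac{f_{xx}(v_3-v_2)}{4}\bigl(v_1^2+\varepsilon v_3(v_2-v_3)\bigr),$$ $$\langle\nabla\lambda,e_3\rangle=\delta\frac{f_{xx}(v_2-v_3)}{4}\bigl(v_1^2+\varepsilon v_2(v_2-v_3)\bigr).$$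
   Context: $\overline{\nabla}$ denotes the Levi-Civita connection of $g_f^{\varepsilon}$, and $\langle\cdot,\cdot\rangle$ denotes both $g_f^\varepsilon$ and the induced metric on $\Sigma$. A surface is non-degenerate if its induced metric is Riemannian or Lorentzian. *)

theory Defs
  imports "HOL-Analysis.Analysis"
begin

text \<open>Coordinates on R^3: index 1 = t, 2 = x, 3 = y. Surface patches are
  parametrised over open subsets of R^2.\<close>

text \<open>C^k and C^infinity via iterated Frechet derivatives.\<close>
fun Ck_on :: "nat \<Rightarrow> 'a::real_normed_vector set \<Rightarrow> ('a \<Rightarrow> 'b::real_normed_vector) \<Rightarrow> bool" where
  "Ck_on 0 U F = continuous_on U F"
| "Ck_on (Suc k) U F = (F differentiable_on U \<and>
      (\<forall>v. Ck_on k U (\<lambda>x. frechet_derivative F (at x) v)))"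

definition smooth_on :: "'a::real_normed_vector set \<Rightarrow> ('a \<Rightarrow> 'b::real_normed_vector) \<Rightarrow> bool" where
  "smooth_on U F \<longleftrightarrow> (\<forall>k. Ck_on k U F)"

text \<open>Partial derivative in the i-th coordinate direction.\<close>
definition pd :: "(real^'n \<Rightarrow> 'b::real_normed_vector) \<Rightarrow> real^'n \<Rightarrow> 'n \<Rightarrow> 'b" where
  "pd h p i = frechet_derivative h (at p) (axis i 1)"

text \<open>The function f(x,y) viewed on R^3.\<close>
definition fxy :: "(real^2 \<Rightarrow> real) \<Rightarrow> real^3 \<Rightarrow> real" where
  "fxy f p = f (vector [p$2, p$3])"

text \<open>Components of g_f^eps = eps dx^2 + f(x,y) dy^2 + 2 dt dy.\<close>
definition gcoef :: "real \<Rightarrow> (real^2 \<Rightarrow> real) \<Rightarrow> real^3 \<Rightarrow> 3 \<Rightarrow> 3 \<Rightarrow> real" where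
  "gcoef eps f p i j =
     (if i = 2 \<and> j = 2 then eps
      else if i = 3 \<and> j = 3 then fxy f p
      else if (i = 1 \<and> j = 3) \<or> (i = 3 \<and> j = 1) then 1
      else 0)"

definition gmat :: "real \<Rightarrow> (real^2 \<Rightarrow> real) \<Rightarrow> real^3 \<Rightarrow> real^3^3" where
  "gmat eps f p = (\<chi> i j. gcoef eps f p i j)"

definition ginner :: "real \<Rightarrow> (real^2 \<Rightarrow> real) \<Rightarrow> real^3 \<Rightarrow> real^3 \<Rightarrow> real^3 \<Rightarrow> real" where
  "ginner eps f p a b = (\<Sum>i\<in>UNIV. \<Sum>j\<in>UNIV. gcoef eps f p i j * a$i * b$j)"

text \<open>Christoffel symbols Gamma^k_{ij} of the Levi-Civita connection.\<close>
definition christoffel :: "real \<Rightarrow> (real^2 \<Rightarrow> real) \<Rightarrow> real^3 \<Rightarrow> 3 \<Rightarrow> 3 \<Rightarrow> 3 \<Rightarrow> real" where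
  "christoffel eps f p k i j =
     (1/2) * (\<Sum>l\<in>UNIV. matrix_inv (gmat eps f p) $ k $ l *
        (pd (\<lambda>q. gcoef eps f q j l) p i + pd (\<lambda>q. gcoef eps f q i l) p j
         - pd (\<lambda>q. gcoef eps f q i j) p l))"

text \<open>Levi-Civita covariant derivative (nabla-bar) of a vector field V along
  the patch X, in the direction of the tangent vector dX_q(w).\<close>
definition covd :: "real \<Rightarrow> (real^2 \<Rightarrow> real) \<Rightarrow> (real^2 \<Rightarrow> real^3) \<Rightarrow> (real^2 \<Rightarrow> real^3)
                    \<Rightarrow> real^2 \<Rightarrow> real^2 \<Rightarrow> real^3" where
  "covd eps f X V q w = frechet_derivative V (at q) w +
     (\<chi> k. \<Sum>i\<in>UNIV. \<Sum>j\<in>UNIV. christoffel eps f (X q) k i j *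
          (frechet_derivative X (at q) w)$i * (V q)$j)"

text \<open>The orthonormal frame (components in the basis d_t, d_x, d_y).\<close>
definition fe1 :: "real^3" where "fe1 = vector [0, 1, 0]"
definition fe2 :: "(real^2 \<Rightarrow> real) \<Rightarrow> real^3 \<Rightarrow> real^3" where
  "fe2 f p = vector [(2 - fxy f p) / (2 * sqrt 2), 0, 1 / sqrt 2]"
definition fe3 :: "(real^2 \<Rightarrow> real) \<Rightarrow> real^3 \<Rightarrow> real^3" where
  "fe3 f p = vector [(2 + fxy f p) / (2 * sqrt 2), 0, - 1 / sqrt 2]"

text \<open>Induced metric (first fundamental form) of the patch.\<close>
definition indmat :: "real \<Rightarrow> (real^2 \<Rightarrow> real) \<Rightarrow> (real^2 \<Rightarrow> real^3) \<Rightarrow> real^2 \<Rightarrow> real^2^2" where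
  "indmat eps f X q = (\<chi> a b. ginner eps f (X q) (pd X q a) (pd X q b))"

text \<open>Non-degenerate: induced metric Riemannian (positive definite) or
  Lorentzian (signature (+,-), i.e. negative determinant) -- 2x2 case.\<close>
definition nondegenerate_at :: "real \<Rightarrow> (real^2 \<Rightarrow> real) \<Rightarrow> (real^2 \<Rightarrow> real^3) \<Rightarrow> real^2 \<Rightarrow> bool" where
  "nondegenerate_at eps f X q \<longleftrightarrow>
     (indmat eps f X q $ 1 $ 1 > 0 \<and> det (indmat eps f X q) > 0) \<or> det (indmat eps f X q) < 0"

text \<open>Gradient on the surface w.r.t. the induced metric of a function lam (pulled back to U).\<close>
definition sgrad :: "real \<Rightarrow> (real^2 \<Rightarrow> real) \<Rightarrow> (real^2 \<Rightarrow> real^3) \<Rightarrow> (real^2 \<Rightarrow> real) \<Rightarrow> real^2 \<Rightarrow> real^3" where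
  "sgrad eps f X lam q = (\<Sum>a\<in>UNIV. \<Sum>b\<in>UNIV.
      (matrix_inv (indmat eps f X q) $ a $ b * pd lam q b) *\<^sub>R pd X q a)"

text \<open>f_xx as a function on R^3.\<close>
definition fxx :: "(real^2 \<Rightarrow> real) \<Rightarrow> real^3 \<Rightarrow> real" where
  "fxx f p = pd (\<lambda>r. pd (fxy f) r 2) p 2"

end

theory Submission
  imports Defs
begin

lemma young_half:
  fixes g :: "'a::real_normed_vector \<Rightarrow> real"
  assumes S: "open S" "q \<in> S" and dg: "\<And>x. x \<in> S \<Longrightarrow> g differentiable at x"
    and du: "(\<lambda>x. frechet_derivative g (at x) u) differentiable at q"
    and e: "e > 0"
  shows "\<exists>d>0. \<forall>h. 0 < h \<and> h < d \<longrightarrow>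
     \<bar>(g (q + h *\<^sub>R u + h *\<^sub>R v) - g (q + h *\<^sub>R u) - g (q + h *\<^sub>R v) + g q)
       - h^2 * frechet_derivative (\<lambda>x. frechet_derivative g (at x) u) (at q) v\<bar>
       \<le> e * h^2 * (2 * norm u + norm v)"
proof -
  define Gu where "Gu = (\<lambda>x. frechet_derivative g (at x) u)"
  define L where "L = frechet_derivative Gu (at q)"
  have hL: "(Gu has_derivative L) (at q)"
    using du unfolding Gu_def L_def by (simp add: frechet_derivative_works)
  then have linL: "linear L" by (simp add: has_derivative_linear)
  obtain d1 where d1: "d1 > 0" "\<And>y. norm (y - q) < d1 \<Longrightarrow> norm (Gu y - Gu q - L (y - q)) \<le> e * norm (y - q)"
    using hL e unfolding has_derivative_at_alt by blast
  obtain r where r: "r > 0" "ball q r \<subseteq> S" using S open_contains_ball by blast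
  define d where "d = min d1 r / (norm u + norm v + 1)"
  have np: "norm u + norm v + 1 > 0" by (smt (verit) norm_ge_zero)
  have dpos: "d > 0" using d1 r np unfolding d_def by simp
  have "\<forall>h. 0 < h \<and> h < d \<longrightarrow>
     \<bar>(g (q + h *\<^sub>R u + h *\<^sub>R v) - g (q + h *\<^sub>R u) - g (q + h *\<^sub>R v) + g q)
       - h^2 * L v\<bar> \<le> e * h^2 * (2 * norm u + norm v)"
  proof (intro allI impI)
    fix h :: real assume h: "0 < h \<and> h < d"
    have hb: "h * (norm u + norm v) < min d1 r"
    proof -
      have "h * (norm u + norm v) \<le> h * (norm u + norm v + 1)" using h by simp
      also have "\<dots> < d * (norm u + norm v + 1)"
        using h np by (intro mult_strict_right_mono) auto
      also have "\<dots> = min d1 r" unfolding d_def using np by simp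
      finally show ?thesis .
    qed
    have close: "norm (s *\<^sub>R u + t *\<^sub>R v) < min d1 r" if "0 \<le> s" "s \<le> h" "0 \<le> t" "t \<le> h" for s t
    proof -
      have "norm (s *\<^sub>R u + t *\<^sub>R v) \<le> norm (s *\<^sub>R u) + norm (t *\<^sub>R v)" by (rule norm_triangle_ineq)
      also have "\<dots> = s * norm u + t * norm v" using that by simp
      also have "\<dots> \<le> h * norm u + h * norm v"
        using that by (intro add_mono mult_right_mono) auto
      finally show ?thesis using hb by (simp add: algebra_simps)
    qed
    have inS: "q + s *\<^sub>R u + t *\<^sub>R v \<in> S" if "0 \<le> s" "s \<le> h" "0 \<le> t" "t \<le> h" for s t
    proof -
      have "dist q (q + s *\<^sub>R u + t *\<^sub>R v) < r"
        using close[OF that] by (simp add: dist_norm norm_minus_commute add.commute)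
      then show ?thesis using r by auto
    qed
    define phi where "phi = (\<lambda>s. g (q + s *\<^sub>R u + h *\<^sub>R v) - g (q + s *\<^sub>R u + 0 *\<^sub>R v))"
    define phi' where "phi' = (\<lambda>s t. t * (Gu (q + s *\<^sub>R u + h *\<^sub>R v) - Gu (q + s *\<^sub>R u + 0 *\<^sub>R v)))"
    have pd: "(phi has_derivative phi' s) (at s within {0..h})" if "0 \<le> s" "s \<le> h" for s
    proof -
      have gd: "(g has_derivative frechet_derivative g (at (q + s *\<^sub>R u + t *\<^sub>R v))) (at (q + s *\<^sub>R u + t *\<^sub>R v))"
        if "0 \<le> t" "t \<le> h" for t
        using dg[OF inS[OF \<open>0 \<le> s\<close> \<open>s \<le> h\<close> that]] frechet_derivative_works by blast
      have lin: "((\<lambda>s. q + s *\<^sub>R u + t *\<^sub>R v) has_derivative (\<lambda>x. x *\<^sub>R u)) (at s within {0..h})" for t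
        by (auto intro!: derivative_eq_intros)
      have c: "((\<lambda>s. g (q + s *\<^sub>R u + t *\<^sub>R v)) has_derivative
          (\<lambda>x. frechet_derivative g (at (q + s *\<^sub>R u + t *\<^sub>R v)) (x *\<^sub>R u))) (at s within {0..h})"
        if "0 \<le> t" "t \<le> h" for t
        using has_derivative_compose[OF lin gd[OF that]] by (simp add: o_def)
      have lf: "frechet_derivative g (at (q + s *\<^sub>R u + t *\<^sub>R v)) (x *\<^sub>R u) = x * Gu (q + s *\<^sub>R u + t *\<^sub>R v)"
        if "0 \<le> t" "t \<le> h" for t x
      proof -
        have "linear (frechet_derivative g (at (q + s *\<^sub>R u + t *\<^sub>R v)))"
          using gd[OF that] has_derivative_linear by blast
        then show ?thesis unfolding Gu_def by (simp add: linear_scale)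
      qed
      have "(phi has_derivative (\<lambda>x. frechet_derivative g (at (q + s *\<^sub>R u + h *\<^sub>R v)) (x *\<^sub>R u)
            - frechet_derivative g (at (q + s *\<^sub>R u + 0 *\<^sub>R v)) (x *\<^sub>R u))) (at s within {0..h})"
        unfolding phi_def using h by (intro has_derivative_diff c) auto
      moreover have "(\<lambda>x. frechet_derivative g (at (q + s *\<^sub>R u + h *\<^sub>R v)) (x *\<^sub>R u)
            - frechet_derivative g (at (q + s *\<^sub>R u + 0 *\<^sub>R v)) (x *\<^sub>R u)) = phi' s"
        unfolding phi'_def fun_eq_iff
      proof
        fix x
        show "frechet_derivative g (at (q + s *\<^sub>R u + h *\<^sub>R v)) (x *\<^sub>R u)
            - frechet_derivative g (at (q + s *\<^sub>R u + 0 *\<^sub>R v)) (x *\<^sub>R u) =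
            x * (Gu (q + s *\<^sub>R u + h *\<^sub>R v) - Gu (q + s *\<^sub>R u + 0 *\<^sub>R v))"
          using lf[of h x] lf[of 0 x] h by (simp add: algebra_simps)
      qed
      ultimately show ?thesis by simp
    qed
    obtain th where th: "th \<in> {0<..<h}" "phi h - phi 0 = phi' th (h - 0)"
      using mvt_simple[of 0 h phi phi'] pd h by auto
    have Delta: "phi h - phi 0 = g (q + h *\<^sub>R u + h *\<^sub>R v) - g (q + h *\<^sub>R u) - g (q + h *\<^sub>R v) + g q"
      unfolding phi_def by simp
    define y1 where "y1 = q + th *\<^sub>R u + h *\<^sub>R v"
    define y2 where "y2 = q + th *\<^sub>R u + 0 *\<^sub>R v"
    have n1: "norm (y1 - q) < d1" using close[of th h] th h unfolding y1_def by auto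
    have n2: "norm (y2 - q) < d1" using close[of th 0] th h unfolding y2_def by auto
    have e1: "norm (Gu y1 - Gu q - L (y1 - q)) \<le> e * norm (y1 - q)" using d1(2)[OF n1] .
    have e2: "norm (Gu y2 - Gu q - L (y2 - q)) \<le> e * norm (y2 - q)" using d1(2)[OF n2] .
    have Ly: "L (y1 - q) - L (y2 - q) = h * L v"
    proof -
      have "L (y1 - q) - L (y2 - q) = L ((y1 - q) - (y2 - q))" using linL by (simp add: linear_diff)
      also have "(y1 - q) - (y2 - q) = h *\<^sub>R v" unfolding y1_def y2_def by simp
      finally show ?thesis using linL by (simp add: linear_scale)
    qed
    have ny1: "norm (y1 - q) \<le> h * norm u + h * norm v"
    proof -
      have "norm (y1 - q) = norm (th *\<^sub>R u + h *\<^sub>R v)" unfolding y1_def by (simp add: algebra_simps)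
      also have "\<dots> \<le> norm (th *\<^sub>R u) + norm (h *\<^sub>R v)" by (rule norm_triangle_ineq)
      also have "\<dots> \<le> h * norm u + h * norm v" using th h by (auto intro!: add_mono mult_right_mono)
      finally show ?thesis .
    qed
    have ny2: "norm (y2 - q) \<le> h * norm u"
      unfolding y2_def using th h by (auto intro!: mult_right_mono)
    have "\<bar>(Gu y1 - Gu y2) - h * L v\<bar> \<le> e * norm (y1 - q) + e * norm (y2 - q)"
      using e1 e2 Ly by (simp add: abs_le_iff)
    also have "\<dots> \<le> e * (h * norm u + h * norm v) + e * (h * norm u)"
      using ny1 ny2 e by (intro add_mono mult_left_mono) auto
    finally have bd: "\<bar>(Gu y1 - Gu y2) - h * L v\<bar> \<le> e * h * (2 * norm u + norm v)"
      by (simp add: algebra_simps)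
    have "\<bar>(phi h - phi 0) - h^2 * L v\<bar> = h * \<bar>(Gu y1 - Gu y2) - h * L v\<bar>"
    proof -
      have "(phi h - phi 0) - h^2 * L v = h * ((Gu y1 - Gu y2) - h * L v)"
        using th(2) unfolding phi'_def y1_def y2_def by (simp add: power2_eq_square algebra_simps)
      then show ?thesis using h by (simp add: abs_mult)
    qed
    also have "\<dots> \<le> h * (e * h * (2 * norm u + norm v))"
      using bd h by (intro mult_left_mono) auto
    finally show "\<bar>(g (q + h *\<^sub>R u + h *\<^sub>R v) - g (q + h *\<^sub>R u) - g (q + h *\<^sub>R v) + g q)
       - h^2 * L v\<bar> \<le> e * h^2 * (2 * norm u + norm v)"
      using Delta by (simp add: power2_eq_square algebra_simps)
  qed
  then show ?thesis using dpos unfolding L_def Gu_def by blast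
qed

lemma young:
  fixes g :: "'a::real_normed_vector \<Rightarrow> real"
  assumes S: "open S" "q \<in> S" and dg: "\<And>x. x \<in> S \<Longrightarrow> g differentiable at x"
    and du: "(\<lambda>x. frechet_derivative g (at x) u) differentiable at q"
    and dv: "(\<lambda>x. frechet_derivative g (at x) v) differentiable at q"
  shows "frechet_derivative (\<lambda>x. frechet_derivative g (at x) u) (at q) v
       = frechet_derivative (\<lambda>x. frechet_derivative g (at x) v) (at q) u"
proof -
  define A where "A = frechet_derivative (\<lambda>x. frechet_derivative g (at x) u) (at q) v"
  define B where "B = frechet_derivative (\<lambda>x. frechet_derivative g (at x) v) (at q) u"
  define C where "C = 2 * norm u + norm v + 2 * norm v + norm u + 1"
  have Cpos: "C > 0" using norm_ge_zero[of u] norm_ge_zero[of v] unfolding C_def by linarith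
  define D where "D = (\<lambda>h. g (q + h *\<^sub>R u + h *\<^sub>R v) - g (q + h *\<^sub>R u) - g (q + h *\<^sub>R v) + g q)"
  have "\<bar>A - B\<bar> \<le> e * C" if e: "e > 0" for e
  proof -
    obtain d1 where d1: "d1 > 0" "\<And>h. 0 < h \<and> h < d1 \<Longrightarrow> \<bar>D h - h^2 * A\<bar> \<le> e * h^2 * (2 * norm u + norm v)"
      using young_half[OF S dg du e, of v] unfolding A_def D_def by blast
    obtain d2 where d2: "d2 > 0" "\<And>h. 0 < h \<and> h < d2 \<Longrightarrow> \<bar>D h - h^2 * B\<bar> \<le> e * h^2 * (2 * norm v + norm u)"
      using young_half[OF S dg dv e, of u] unfolding B_def D_def by (auto simp: algebra_simps)
    define h where "h = min d1 d2 / 2"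
    have h: "0 < h" "h < d1" "h < d2" using d1 d2 unfolding h_def by auto
    have "h^2 * \<bar>A - B\<bar> = \<bar>(D h - h^2 * B) - (D h - h^2 * A)\<bar>"
    proof -
      have "(D h - h^2 * B) - (D h - h^2 * A) = h^2 * (A - B)" by (simp add: algebra_simps)
      then show ?thesis by (simp add: abs_mult)
    qed
    also have "\<dots> \<le> \<bar>D h - h^2 * B\<bar> + \<bar>D h - h^2 * A\<bar>" by (rule abs_triangle_ineq4)
    also have "\<dots> \<le> e * h^2 * (2 * norm v + norm u) + e * h^2 * (2 * norm u + norm v)"
      using d1(2)[of h] d2(2)[of h] h by (intro add_mono) auto
    also have "\<dots> \<le> h^2 * (e * C)" unfolding C_def using e by (simp add: algebra_simps)
    finally show ?thesis using h by simp
  qed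
  then have le: "\<bar>A - B\<bar> \<le> 0 + x" if "x > 0" for x
    using \<open>\<And>e. e > 0 \<Longrightarrow> \<bar>A - B\<bar> \<le> e * C\<close>[of "x / C"] Cpos that by simp
  have "\<bar>A - B\<bar> \<le> 0" by (rule field_le_epsilon) (rule le)
  then have "\<bar>A - B\<bar> = 0" by simp
  then show ?thesis unfolding A_def B_def by simp
qed

lemma matrix_inv_eq:
  fixes A :: "'a::comm_ring_1^'n^'n"
  assumes "A ** B = mat 1" "B ** A = mat 1"
  shows "matrix_inv A = B"
proof -
  have "\<exists>A'. A ** A' = mat 1 \<and> A' ** A = mat 1" using assms by blast
  then have h: "A ** matrix_inv A = mat 1 \<and> matrix_inv A ** A = mat 1"
    unfolding matrix_inv_def by (rule someI_ex)
  have "matrix_inv A = matrix_inv A ** (A ** B)" using assms by (simp add: matrix_mul_rid)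
  also have "\<dots> = (matrix_inv A ** A) ** B" by (simp add: matrix_mul_assoc)
  also have "\<dots> = B" using h by (simp add: matrix_mul_lid)
  finally show ?thesis .
qed

lemma three_neq: "(1::3) \<noteq> 2" "(1::3) \<noteq> 3" "(2::3) \<noteq> 3" "(2::3) \<noteq> 1" "(3::3) \<noteq> 1" "(3::3) \<noteq> 2"
  by simp_all

lemma two_neq: "(1::2) \<noteq> 2" "(2::2) \<noteq> 1"
  by simp_all

definition ginv :: "real \<Rightarrow> (real^2 \<Rightarrow> real) \<Rightarrow> real^3 \<Rightarrow> real^3^3" where
  "ginv eps f p = (\<chi> i j. if i = 1 \<and> j = 1 then - fxy f p else if i = 2 \<and> j = 2 then 1 / eps
     else if (i = 1 \<and> j = 3) \<or> (i = 3 \<and> j = 1) then 1 else 0)"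

lemma gmat_inv: "eps \<noteq> 0 \<Longrightarrow> matrix_inv (gmat eps f p) = ginv eps f p"
  apply (rule matrix_inv_eq)
  apply (simp_all add: matrix_matrix_mult_def gmat_def ginv_def gcoef_def mat_def vec_eq_iff forall_3 sum_3)
  done

lemma pd_gcoef: "pd (\<lambda>q. gcoef eps f q j l) p i = (if j = 3 \<and> l = 3 then pd (fxy f) p i else 0)"
proof (cases "j = 3 \<and> l = 3")
  case True
  then have "(\<lambda>q. gcoef eps f q j l) = fxy f" by (auto simp: gcoef_def fun_eq_iff)
  then show ?thesis using True by simp
next
  case False
  then have "(\<lambda>q. gcoef eps f q j l) = (\<lambda>q. gcoef eps f p j l)" by (auto simp: gcoef_def fun_eq_iff)
  then show ?thesis using False by (auto simp: pd_def)
qed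

definition gam :: "real \<Rightarrow> real \<Rightarrow> real \<Rightarrow> real^3 \<Rightarrow> real^3 \<Rightarrow> real^3" where
  "gam eps a b Y W = vector [a/2*(Y$2*W$3 + Y$3*W$2) + b/2*Y$3*W$3, -(a/(2*eps))*Y$3*W$3, 0]"

lemma christ:
  assumes "eps \<noteq> 0" "pd (fxy f) p 1 = 0"
  shows "(\<chi> k. \<Sum>i\<in>UNIV. \<Sum>j\<in>UNIV. christoffel eps f p k i j * Y$i * W$j)
     = gam eps (pd (fxy f) p 2) (pd (fxy f) p 3) Y W"
  using assms
  by (simp add: christoffel_def gmat_inv pd_gcoef gam_def vec_eq_iff forall_3 sum_3 ginv_def field_simps)

lemma fd_eq: "(F has_derivative F') (at q) \<Longrightarrow> frechet_derivative F (at q) w = F' w"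
  using frechet_derivative_at by metis

lemma pd_add: "h1 differentiable at q \<Longrightarrow> h2 differentiable at q \<Longrightarrow>
  pd (\<lambda>x. h1 x + h2 x) q i = pd h1 q i + pd h2 q i"
  unfolding pd_def by (intro fd_eq) (auto intro!: derivative_eq_intros simp: frechet_derivative_works)

lemma pd_diff: "h1 differentiable at q \<Longrightarrow> h2 differentiable at q \<Longrightarrow>
  pd (\<lambda>x. h1 x - h2 x) q i = pd h1 q i - pd h2 q i"
  unfolding pd_def by (intro fd_eq) (auto intro!: derivative_eq_intros simp: frechet_derivative_works)

lemma pd_minus: "h1 differentiable at q \<Longrightarrow> pd (\<lambda>x. - h1 x) q i = - pd h1 q i"
  unfolding pd_def by (intro fd_eq) (auto intro!: derivative_eq_intros simp: frechet_derivative_works)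

lemma pd_mult: "(h1 :: real^'n \<Rightarrow> real) differentiable at q \<Longrightarrow> h2 differentiable at q \<Longrightarrow>
  pd (\<lambda>x. h1 x * h2 x) q i = pd h1 q i * h2 q + h1 q * pd h2 q i"
  unfolding pd_def
  by (rule fd_eq) (rule has_derivative_eq_rhs, (rule derivative_intros | simp add: frechet_derivative_works)+, auto simp: algebra_simps)

lemma pd_divc: "(h1 :: real^'n \<Rightarrow> real) differentiable at q \<Longrightarrow>
  pd (\<lambda>x. h1 x / c) q i = pd h1 q i / c"
  unfolding pd_def
  by (rule fd_eq) (rule bounded_linear.has_derivative[OF bounded_linear_divide], simp add: frechet_derivative_works)

lemma pd_const: "pd (\<lambda>x. c) q i = 0"
  unfolding pd_def by simp

lemma differentiable_divc: "(h1 :: real^'n \<Rightarrow> real) differentiable at q \<Longrightarrow> (\<lambda>x. h1 x / c) differentiable at q"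
  unfolding differentiable_def using bounded_linear.has_derivative[OF bounded_linear_divide] by blast

lemma fd_nth: "F differentiable at x \<Longrightarrow>
   frechet_derivative (\<lambda>x. F x $ k) (at x) w = frechet_derivative F (at x) w $ k"
  by (rule fd_eq) (rule bounded_linear.has_derivative[OF bounded_linear_vec_nth], simp add: frechet_derivative_works)

lemma diff_nth: "F differentiable at x \<Longrightarrow> (\<lambda>x. F x $ k) differentiable at x"
  unfolding differentiable_def
  using bounded_linear.has_derivative[OF bounded_linear_vec_nth] by blast

lemma trans_inv:
  assumes "\<And>y. g (y + c) = g y"
  shows "frechet_derivative g (at (x + c)) = frechet_derivative g (at x)"
proof -
  have "(g has_derivative D) (at (x + c)) \<longleftrightarrow> (g has_derivative D) (at x)" for D
  proof
    assume "(g has_derivative D) (at (x + c))"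
    moreover have "((\<lambda>y. y + c) has_derivative (\<lambda>y. y)) (at x)" by (auto intro!: derivative_eq_intros)
    ultimately have "((\<lambda>y. g (y + c)) has_derivative D) (at x)"
      using has_derivative_compose[of "\<lambda>y. y + c" "\<lambda>y. y" x UNIV g D] by (simp add: o_def)
    then show "(g has_derivative D) (at x)" using assms by simp
  next
    assume "(g has_derivative D) (at x)"
    moreover have "((\<lambda>y. y - c) has_derivative (\<lambda>y. y)) (at (x + c))" by (auto intro!: derivative_eq_intros)
    ultimately have "((\<lambda>y. g (y - c)) has_derivative D) (at (x + c))"
      using has_derivative_compose[of "\<lambda>y. y - c" "\<lambda>y. y" "x + c" UNIV g D] by (simp add: o_def)
    moreover have "g (y - c) = g y" for y using assms[of "y - c"] by simp
    ultimately show "(g has_derivative D) (at (x + c))" by simp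
  qed
  then show ?thesis unfolding frechet_derivative_def by simp
qed

lemma line_const_zero:
  assumes "g differentiable at p" "\<And>s. g (p + s *\<^sub>R v) = g p"
  shows "frechet_derivative g (at p) v = (0::real)"
proof -
  have "(g has_derivative frechet_derivative g (at p)) (at p)"
    using assms(1) frechet_derivative_works by blast
  then have gd: "(g has_derivative frechet_derivative g (at p)) (at (p + 0 *\<^sub>R v))" by simp
  have l: "((\<lambda>s. p + s *\<^sub>R v) has_derivative (\<lambda>s. s *\<^sub>R v)) (at 0)" by (auto intro!: derivative_eq_intros)
  have "((\<lambda>s. g (p + s *\<^sub>R v)) has_derivative (\<lambda>s. frechet_derivative g (at p) (s *\<^sub>R v))) (at 0)"
    using has_derivative_compose[OF l gd] by (simp add: o_def)
  moreover have "((\<lambda>s. g (p + s *\<^sub>R v)) has_derivative (\<lambda>s. 0)) (at 0)"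
    using assms(2) by simp
  ultimately have "(\<lambda>s. frechet_derivative g (at p) (s *\<^sub>R v)) = (\<lambda>s. 0)"
    using has_derivative_unique by blast
  then show ?thesis by (metis scaleR_one)
qed

lemma young':
  fixes g :: "'a::real_normed_vector \<Rightarrow> real"
  assumes S: "open S" "q \<in> S" and dg: "\<And>x. x \<in> S \<Longrightarrow> g differentiable at x"
    and Gu: "\<And>x. x \<in> S \<Longrightarrow> frechet_derivative g (at x) u = Gu x"
    and Gv: "\<And>x. x \<in> S \<Longrightarrow> frechet_derivative g (at x) v = Gv x"
    and du: "Gu differentiable at q" and dv: "Gv differentiable at q"
  shows "frechet_derivative Gu (at q) v = frechet_derivative Gv (at q) u"
proof -
  have e1: "frechet_derivative Gu (at q) = frechet_derivative (\<lambda>x. frechet_derivative g (at x) u) (at q)"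
    by (rule frechet_derivative_transform_within_open[OF du S]) (simp add: Gu)
  have e2: "frechet_derivative Gv (at q) = frechet_derivative (\<lambda>x. frechet_derivative g (at x) v) (at q)"
    by (rule frechet_derivative_transform_within_open[OF dv S]) (simp add: Gv)
  have d1: "(\<lambda>x. frechet_derivative g (at x) u) differentiable at q"
    using du S Gu unfolding differentiable_def by (metis has_derivative_transform_within_open)
  have d2: "(\<lambda>x. frechet_derivative g (at x) v) differentiable at q"
    using dv S Gv unfolding differentiable_def by (metis has_derivative_transform_within_open)
  show ?thesis unfolding e1 e2 by (rule young[OF S dg d1 d2])
qed

lemma smooth_C2:
  assumes "smooth_on S F" "open S"
  shows "\<forall>x\<in>S. F differentiable at x" "\<forall>x\<in>S. \<forall>v. (\<lambda>y. frechet_derivative F (at y) v) differentiable at x"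
proof -
  have "Ck_on 2 S F" using assms(1) unfolding smooth_on_def by blast
  then have "F differentiable_on S" "\<forall>v. (\<lambda>y. frechet_derivative F (at y) v) differentiable_on S"
    by (simp_all add: numeral_2_eq_2)
  then show "\<forall>x\<in>S. F differentiable at x" "\<forall>x\<in>S. \<forall>v. (\<lambda>y. frechet_derivative F (at y) v) differentiable at x"
    using assms(2) differentiable_on_eq_differentiable_at by blast+
qed

lemma fxy_shift: "fxy f (y + s *\<^sub>R axis 1 1) = fxy f y"
  by (simp add: fxy_def axis_def)

lemma gam_comps:
  "gam eps a b Y W $ 1 = a/2*(Y$2*W$3 + Y$3*W$2) + b/2*Y$3*W$3"
  "gam eps a b Y W $ 2 = -(a/(2*eps))*Y$3*W$3"
  "gam eps a b Y W $ 3 = 0"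
  by (simp_all add: gam_def)

lemma lin3:
  fixes L :: "real^3 \<Rightarrow> real"
  assumes "linear L"
  shows "L w = w$1 * L (axis 1 1) + w$2 * L (axis 2 1) + w$3 * L (axis 3 1)"
proof -
  have "L w = L (\<Sum>i\<in>UNIV. (w$i) *s axis i 1)" by (simp add: basis_expansion)
  also have "\<dots> = (\<Sum>i\<in>UNIV. w$i * L (axis i 1))"
    using assms by (simp add: linear_sum linear_scale scalar_mult_eq_scaleR)
  finally show ?thesis by (simp add: sum_3)
qed

lemma fe2_alt: "fe2 f p = ((2 - fxy f p) / (2 * sqrt 2)) *\<^sub>R axis 1 1 + (1 / sqrt 2) *\<^sub>R axis 3 1"
  by (simp add: fe2_def vec_eq_iff forall_3 axis_def)

lemma fe3_alt: "fe3 f p = ((2 + fxy f p) / (2 * sqrt 2)) *\<^sub>R axis 1 1 + (- 1 / sqrt 2) *\<^sub>R axis 3 1"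
  by (simp add: fe3_def vec_eq_iff forall_3 axis_def)

lemma vec_solve: "-(a + g) = (l::'a::ab_group_add) \<Longrightarrow> a = -l - g"
proof -
  assume "-(a + g) = l"
  then have "a + g = -l" by (metis minus_minus)
  then show ?thesis by (simp add: eq_diff_eq)
qed

lemmas pd_rules = pd_add pd_diff pd_minus pd_mult pd_divc pd_const
  differentiable_add differentiable_diff differentiable_minus differentiable_mult differentiable_divc differentiable_const

lemma pd_R1:
  fixes l y1 y2 y3 w2 w3 F G :: "real^'n \<Rightarrow> real"
  assumes "l differentiable at q" "y1 differentiable at q" "y2 differentiable at q" "y3 differentiable at q"
    "w2 differentiable at q" "w3 differentiable at q" "F differentiable at q" "G differentiable at q"
  shows "pd (\<lambda>x. -(l x * y1 x) - (F x/2*(y2 x*w3 x + y3 x*w2 x) + G x/2*y3 x*w3 x)) q b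
    = -(pd l q b * y1 q + l q * pd y1 q b)
      - (pd F q b/2*(y2 q*w3 q + y3 q*w2 q)
         + F q/2*(pd y2 q b*w3 q + y2 q*pd w3 q b + pd y3 q b*w2 q + y3 q*pd w2 q b)
         + pd G q b/2*y3 q*w3 q + G q/2*(pd y3 q b*w3 q + y3 q*pd w3 q b))"
  using assms by (simp only: pd_rules) (simp add: algebra_simps)

lemma pd_R2:
  fixes l y2 y3 w3 F :: "real^'n \<Rightarrow> real"
  assumes "l differentiable at q" "y2 differentiable at q" "y3 differentiable at q"
    "w3 differentiable at q" "F differentiable at q"
  shows "pd (\<lambda>x. -(l x * y2 x) - (-(F x/(2*e))*y3 x*w3 x)) q b
    = -(pd l q b * y2 q + l q * pd y2 q b)
      + (pd F q b/(2*e)*y3 q*w3 q + F q/(2*e)*(pd y3 q b*w3 q + y3 q*pd w3 q b))"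
  using assms by (simp only: pd_rules) (simp add: algebra_simps)

lemma pd_R3:
  fixes l y3 :: "real^'n \<Rightarrow> real"
  assumes "l differentiable at q" "y3 differentiable at q"
  shows "pd (\<lambda>x. -(l x * y3 x) - 0) q b = -(pd l q b * y3 q + l q * pd y3 q b)"
  using assms by (simp only: pd_rules)

lemma ginner_expl: "ginner eps f p a b = eps*a$2*b$2 + fxy f p*a$3*b$3 + a$1*b$3 + a$3*b$1"
  by (simp add: ginner_def gcoef_def sum_3 algebra_simps)

lemma inv2:
  fixes G :: "real^2^2"
  assumes d: "d = G$1$1 * G$2$2 - G$1$2 * G$2$1" "d \<noteq> 0"
  shows "matrix_inv G = (\<chi> i j. (if i = 1 \<and> j = 1 then G$2$2 else if i = 2 \<and> j = 2 then G$1$1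
      else - G$i$j) / d)"
  apply (rule matrix_inv_eq)
  using d(2)
  by (simp_all add: matrix_matrix_mult_def mat_def vec_eq_iff forall_2 sum_2 field_simps, simp_all add: d(1) algebra_simps)

lemma inv2_app:
  fixes a b c d l1 l2 :: real
  assumes "d = a*c - b*b" "d \<noteq> 0"
  shows "(c/d*l1 + -b/d*l2)*a + (-b/d*l1 + a/d*l2)*b = l1"
    "(c/d*l1 + -b/d*l2)*b + (-b/d*l1 + a/d*l2)*c = l2"
proof -
  have "(c/d*l1 + -b/d*l2)*a + (-b/d*l1 + a/d*l2)*b = ((a*c - b*b)*l1)/d"
    by (simp add: add_divide_distrib diff_divide_distrib algebra_simps)
  then show "(c/d*l1 + -b/d*l2)*a + (-b/d*l1 + a/d*l2)*b = l1" using assms by simp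
  have "(c/d*l1 + -b/d*l2)*b + (-b/d*l1 + a/d*l2)*c = ((a*c - b*b)*l2)/d"
    by (simp add: add_divide_distrib diff_divide_distrib algebra_simps)
  then show "(c/d*l1 + -b/d*l2)*b + (-b/d*l1 + a/d*l2)*c = l2" using assms by simp
qed

lemma fin:
  fixes X e d y1 y2 y3 k w3 :: real
  assumes kk: "k*k = 1/2" and w3: "w3 = y2*k - y3*k" and e2: "e*e = 1" and d2: "d*d = 1"
    and u: "e*y1^2 + y2^2 - y3^2 = d"
  shows "(-X*e/2) * w3 * (0 - d * w3 * (e*y1)) = d * (X * y1 * (y2 - y3)^2) / 4"
    "(-X*e/2) * w3 * (k - d * w3 * y2) = d * (X * (y3 - y2)) / 4 * (y1^2 + e*y3*(y2 - y3))"
    "(-X*e/2) * w3 * (-k - d * w3 * (-y3)) = d * (X * (y2 - y3)) / 4 * (y1^2 + e*y2*(y2 - y3))"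
proof -
  have ww0: "w3 * w3 = (k*k)*(y2 - y3)^2" unfolding w3 by (simp add: power2_eq_square algebra_simps)
  have ww: "w3 * w3 = (y2 - y3)^2 / 2" unfolding ww0 kk by simp
  have wk0: "w3 * k = (k*k) * (y2 - y3)" unfolding w3 by (simp add: algebra_simps)
  have wk: "w3 * k = (y2 - y3) / 2" unfolding wk0 kk by simp
  have r1: "e*(1 - d*y2*(y2-y3)) = d*(y1^2 + e*y3*(y2-y3))"
  proof -
    have "e*(1 - d*y2*(y2-y3)) = e*d*(d - y2*(y2-y3))" using d2 by (simp add: algebra_simps)
    also have "d - y2*(y2-y3) = e*y1^2 + y3*(y2-y3)" unfolding u[symmetric] by (simp add: algebra_simps power2_eq_square)
    also have "e*d*(e*y1^2 + y3*(y2-y3)) = (e*e)*d*y1^2 + e*d*y3*(y2-y3)" by (simp add: algebra_simps)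
    finally show ?thesis using e2 by (simp add: algebra_simps)
  qed
  have r2: "e*(1 - d*y3*(y2-y3)) = d*(y1^2 + e*y2*(y2-y3))"
  proof -
    have "e*(1 - d*y3*(y2-y3)) = e*d*(d - y3*(y2-y3))" using d2 by (simp add: algebra_simps)
    also have "d - y3*(y2-y3) = e*y1^2 + y2*(y2-y3)" unfolding u[symmetric] by (simp add: algebra_simps power2_eq_square)
    also have "e*d*(e*y1^2 + y2*(y2-y3)) = (e*e)*d*y1^2 + e*d*y2*(y2-y3)" by (simp add: algebra_simps)
    finally show ?thesis using e2 by (simp add: algebra_simps)
  qed
  show "(-X*e/2) * w3 * (0 - d * w3 * (e*y1)) = d * (X * y1 * (y2 - y3)^2) / 4"
  proof -
    have "(-X*e/2) * w3 * (0 - d * w3 * (e*y1)) = X * (e*e) * d * y1 * (w3 * w3) / 2" by (simp add: algebra_simps)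
    then show ?thesis unfolding ww e2 by simp
  qed
  show "(-X*e/2) * w3 * (k - d * w3 * y2) = d * (X * (y3 - y2)) / 4 * (y1^2 + e*y3*(y2 - y3))"
  proof -
    have "(-X*e/2) * w3 * (k - d * w3 * y2) = (-X/2) * (e * ((w3 * k) - d * (w3 * w3) * y2))" by (simp add: field_simps)
    also have "\<dots> = (-X/2) * ((y2 - y3)/2) * (e*(1 - d*y2*(y2-y3)))" unfolding wk ww by (simp add: field_simps power2_eq_square)
    also have "\<dots> = d * (X * (y3 - y2)) / 4 * (y1^2 + e*y3*(y2 - y3))" unfolding r1 by (simp add: field_simps)
    finally show ?thesis .
  qed
  show "(-X*e/2) * w3 * (-k - d * w3 * (-y3)) = d * (X * (y2 - y3)) / 4 * (y1^2 + e*y2*(y2 - y3))"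
  proof -
    have "(-X*e/2) * w3 * (-k - d * w3 * (-y3)) = (X/2) * (e * ((w3 * k) - d * (w3 * w3) * y3))" by (simp add: field_simps)
    also have "\<dots> = (X/2) * ((y2 - y3)/2) * (e*(1 - d*y3*(y2-y3)))" unfolding wk ww by (simp add: field_simps power2_eq_square)
    also have "\<dots> = d * (X * (y2 - y3)) / 4 * (y1^2 + e*y2*(y2 - y3))" unfolding r2 by (simp add: field_simps)
    finally show ?thesis .
  qed
qed

theorem mainTheorem2:
  fixes eps delta :: real and f :: "real^2 \<Rightarrow> real" and N :: "(real^3) set"
    and U :: "(real^2) set" and X :: "real^2 \<Rightarrow> real^3"
    and v1 v2 v3 lam :: "real^2 \<Rightarrow> real" and V :: "real^2 \<Rightarrow> real^3"
  assumes eps: "eps = 1 \<or> eps = -1"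
    and delta: "delta = 1 \<or> delta = -1"
    and N_open: "open N"
    and f_smooth: "smooth_on N (fxy f)"
    and U_open: "open U"
    and X_smooth: "smooth_on U X"
    and X_in: "X ` U \<subseteq> N"
    and immersion: "\<forall>q\<in>U. inj (frechet_derivative X (at q))"
    and nondeg: "\<forall>q\<in>U. nondegenerate_at eps f X q"
    and v_smooth: "smooth_on U v1" "smooth_on U v2" "smooth_on U v3"
    and V_def: "\<forall>q\<in>U. V q = v1 q *\<^sub>R fe1 + v2 q *\<^sub>R fe2 f (X q) + v3 q *\<^sub>R fe3 f (X q)"
    and normal: "\<forall>q\<in>U. \<forall>w. ginner eps f (X q) (V q) (frechet_derivative X (at q) w) = 0"
    and unit: "\<forall>q\<in>U. eps * (v1 q)^2 + (v2 q)^2 - (v3 q)^2 = delta"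
    and v1_nz: "\<forall>q\<in>U. v1 q \<noteq> 0"
    and lam_smooth: "smooth_on U lam"
    and umbilic: "\<forall>q\<in>U. \<forall>w. - covd eps f X V q w = lam q *\<^sub>R frechet_derivative X (at q) w"
  shows "\<forall>q\<in>U.
     ginner eps f (X q) (sgrad eps f X lam q) fe1
        = delta * (fxx f (X q) * v1 q * (v2 q - v3 q)^2) / 4
   \<and> ginner eps f (X q) (sgrad eps f X lam q) (fe2 f (X q))
        = delta * (fxx f (X q) * (v3 q - v2 q)) / 4 * ((v1 q)^2 + eps * v3 q * (v2 q - v3 q))
   \<and> ginner eps f (X q) (sgrad eps f X lam q) (fe3 f (X q))
        = delta * (fxx f (X q) * (v2 q - v3 q)) / 4 * ((v1 q)^2 + eps * v2 q * (v2 q - v3 q))"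
proof (intro ballI)
  fix q assume q: "q \<in> U"
  have eps0: "eps \<noteq> 0" using eps by auto
  note Xd = smooth_C2[OF X_smooth U_open]
  note fd = smooth_C2[OF f_smooth N_open]
  have lamd: "\<forall>x\<in>U. lam differentiable at x" using smooth_C2[OF lam_smooth U_open] by blast
  have v1d: "\<forall>x\<in>U. v1 differentiable at x" using smooth_C2[OF v_smooth(1) U_open] by blast
  have v2d: "\<forall>x\<in>U. v2 differentiable at x" using smooth_C2[OF v_smooth(2) U_open] by blast
  have v3d: "\<forall>x\<in>U. v3 differentiable at x" using smooth_C2[OF v_smooth(3) U_open] by blast
  define fx where "fx = (\<lambda>r. pd (fxy f) r 2)"
  define fy where "fy = (\<lambda>r. pd (fxy f) r 3)"
  have XN: "X x \<in> N" if "x \<in> U" for x using X_in that by blast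
  have fxd: "fx differentiable at p" if "p \<in> N" for p
    using fd(2) that unfolding fx_def pd_def by blast
  have fyd: "fy differentiable at p" if "p \<in> N" for p
    using fd(2) that unfolding fy_def pd_def by blast
  have ft0: "pd (fxy f) p 1 = 0" if "p \<in> N" for p
    unfolding pd_def by (rule line_const_zero) (use fd(1) that fxy_shift in auto)
  have fxt0: "pd fx p 1 = 0" if "p \<in> N" for p
    unfolding pd_def
  proof (rule line_const_zero)
    show "fx differentiable at p" using fxd that .
    fix s show "fx (p + s *\<^sub>R axis 1 1) = fx p"
      unfolding fx_def pd_def by (subst trans_inv) (auto simp: fxy_shift)
  qed
  have fyt0: "pd fy p 1 = 0" if "p \<in> N" for p
    unfolding pd_def
  proof (rule line_const_zero)
    show "fy differentiable at p" using fyd that .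
    fix s show "fy (p + s *\<^sub>R axis 1 1) = fy p"
      unfolding fy_def pd_def by (subst trans_inv) (auto simp: fxy_shift)
  qed
  have fxy_sym: "pd fx p 3 = pd fy p 2" if "p \<in> N" for p
    unfolding fx_def fy_def pd_def
    by (rule young[OF N_open that]) (use fd that in auto)
  \<comment> \<open>differentiability of V\<close>
  have Vd: "V differentiable at x" if x: "x \<in> U" for x
  proof -
    define V' where "V' = (\<lambda>x. v1 x *\<^sub>R fe1 + v2 x *\<^sub>R fe2 f (X x) + v3 x *\<^sub>R fe3 f (X x))"
    have Fd: "(\<lambda>x. fxy f (X x)) differentiable at x"
      using differentiable_compose[of "fxy f" X x UNIV] fd(1) Xd(1) XN x by blast
    have "V' differentiable at x"
      unfolding V'_def fe2_alt fe3_alt using Fd v1d v2d v3d x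
      by (intro differentiable_add differentiable_scaleR differentiable_divide differentiable_diff
          differentiable_const) auto
    then show ?thesis
      using V_def U_open x unfolding differentiable_def V'_def
      by (metis (no_types, lifting) has_derivative_transform_within_open)
  qed
  define Xa where "Xa = (\<lambda>a x. frechet_derivative X (at x) (axis a 1))"
  define R where "R = (\<lambda>a x. -(lam x *\<^sub>R Xa a x) - gam eps (fx (X x)) (fy (X x)) (Xa a x) (V x))"
  have umb: "frechet_derivative V (at x) w = -(lam x *\<^sub>R frechet_derivative X (at x) w)
      - gam eps (fx (X x)) (fy (X x)) (frechet_derivative X (at x) w) (V x)" if x: "x \<in> U" for x w
  proof -
    have "- covd eps f X V x w = lam x *\<^sub>R frechet_derivative X (at x) w" using umbilic x by blast
    moreover have "covd eps f X V x w = frechet_derivative V (at x) w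
       + gam eps (fx (X x)) (fy (X x)) (frechet_derivative X (at x) w) (V x)"
      unfolding covd_def fx_def fy_def using christ[OF eps0 ft0[OF XN[OF x]]] by simp
    ultimately show ?thesis by (intro vec_solve) simp
  qed
  have umbR: "frechet_derivative V (at x) (axis a 1) = R a x" if "x \<in> U" for x a
    using umb[OF that] unfolding R_def Xa_def by simp
  have Xad: "(\<lambda>x. Xa a x $ j) differentiable at x" if "x \<in> U" for x a j
    unfolding Xa_def by (rule diff_nth) (use Xd(2) that in blast)
  have Vjd: "(\<lambda>x. V x $ j) differentiable at x" if "x \<in> U" for x j
    by (rule diff_nth) (use Vd that in blast)
  have FXd: "(\<lambda>x. fx (X x)) differentiable at x" if "x \<in> U" for x
    using differentiable_compose[of fx X x UNIV] fxd Xd(1) XN that by blast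
  have FYd: "(\<lambda>x. fy (X x)) differentiable at x" if "x \<in> U" for x
    using differentiable_compose[of fy X x UNIV] fyd Xd(1) XN that by blast
  have Rd: "(\<lambda>x. R a x $ j) differentiable at x" if x: "x \<in> U" for x a j
  proof -
    have "j = 1 \<or> j = 2 \<or> j = 3" using exhaust_3 by blast
    then show ?thesis
      unfolding R_def using Xad[OF x] Vjd[OF x] FXd[OF x] FYd[OF x] lamd x
      by (auto simp: gam_comps intro!: differentiable_add differentiable_diff differentiable_mult
           differentiable_minus differentiable_divc)
  qed
  have symX: "pd (\<lambda>x. Xa 1 x $ j) q 2 = pd (\<lambda>x. Xa 2 x $ j) q 1" for j
    unfolding pd_def
  proof (rule young'[OF U_open q])
    show "(\<lambda>x. X x $ j) differentiable at x" if "x \<in> U" for x using diff_nth Xd(1) that by blast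
    show "frechet_derivative (\<lambda>x. X x $ j) (at x) (axis 1 1) = Xa 1 x $ j" if "x \<in> U" for x
      unfolding Xa_def using fd_nth Xd(1) that by blast
    show "frechet_derivative (\<lambda>x. X x $ j) (at x) (axis 2 1) = Xa 2 x $ j" if "x \<in> U" for x
      unfolding Xa_def using fd_nth Xd(1) that by blast
  qed (use Xad q in auto)
  have symV: "pd (\<lambda>x. R 1 x $ j) q 2 = pd (\<lambda>x. R 2 x $ j) q 1" for j
    unfolding pd_def
  proof (rule young'[OF U_open q])
    show "(\<lambda>x. V x $ j) differentiable at x" if "x \<in> U" for x using Vjd that by blast
    show "frechet_derivative (\<lambda>x. V x $ j) (at x) (axis 1 1) = R 1 x $ j" if "x \<in> U" for x
      using fd_nth[OF Vd[OF that]] umbR[OF that] by simp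
    show "frechet_derivative (\<lambda>x. V x $ j) (at x) (axis 2 1) = R 2 x $ j" if "x \<in> U" for x
      using fd_nth[OF Vd[OF that]] umbR[OF that] by simp
  qed (use Rd q in auto)
  have pdV: "pd (\<lambda>x. V x $ j) q b = R b q $ j" for j b
    unfolding pd_def using fd_nth[OF Vd[OF q]] umbR[OF q] by simp
  have pdFX: "pd (\<lambda>x. fx (X x)) q b = pd fx (X q) 2 * Xa b q $ 2 + pd fx (X q) 3 * Xa b q $ 3" for b
  proof -
    have "pd (\<lambda>x. fx (X x)) q b = frechet_derivative fx (at (X q)) (Xa b q)"
      unfolding pd_def Xa_def using frechet_derivative_compose[of X q fx] Xd(1) fxd XN q
      by (simp add: o_def)
    also have "\<dots> = Xa b q $ 1 * pd fx (X q) 1 + Xa b q $ 2 * pd fx (X q) 2 + Xa b q $ 3 * pd fx (X q) 3"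
      unfolding pd_def by (rule lin3) (use linear_frechet_derivative fxd XN q in blast)
    finally show ?thesis using fxt0 XN q by simp
  qed
  have pdFY: "pd (\<lambda>x. fy (X x)) q b = pd fx (X q) 3 * Xa b q $ 2 + pd fy (X q) 3 * Xa b q $ 3" for b
  proof -
    have "pd (\<lambda>x. fy (X x)) q b = frechet_derivative fy (at (X q)) (Xa b q)"
      unfolding pd_def Xa_def using frechet_derivative_compose[of X q fy] Xd(1) fyd XN q
      by (simp add: o_def)
    also have "\<dots> = Xa b q $ 1 * pd fy (X q) 1 + Xa b q $ 2 * pd fy (X q) 2 + Xa b q $ 3 * pd fy (X q) 3"
      unfolding pd_def by (rule lin3) (use linear_frechet_derivative fyd XN q in blast)
    finally show ?thesis using fyt0 fxy_sym XN q by simp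
  qed
  have R1f: "(\<lambda>x. R a x $ 1) = (\<lambda>x. -(lam x * Xa a x $ 1) - (fx (X x)/2*(Xa a x $ 2*V x $ 3 + Xa a x $ 3*V x $ 2)
     + fy (X x)/2*Xa a x $ 3*V x $ 3))" for a
    by (simp add: R_def gam_comps fun_eq_iff)
  have R2f: "(\<lambda>x. R a x $ 2) = (\<lambda>x. -(lam x * Xa a x $ 2) - (-(fx (X x)/(2*eps))*Xa a x $ 3*V x $ 3))" for a
    by (simp add: R_def gam_comps fun_eq_iff)
  have R3f: "(\<lambda>x. R a x $ 3) = (\<lambda>x. -(lam x * Xa a x $ 3) - 0)" for a
    by (simp add: R_def gam_comps fun_eq_iff)
  note atoms = lamd[rule_format, OF q] Xad[OF q] Vjd[OF q] FXd[OF q] FYd[OF q]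
  have P1: "pd (\<lambda>x. R a x $ 1) q b = -(pd lam q b * Xa a q $ 1 + lam q * pd (\<lambda>x. Xa a x $ 1) q b)
      - (pd (\<lambda>x. fx (X x)) q b/2*(Xa a q $ 2*V q $ 3 + Xa a q $ 3*V q $ 2)
         + fx (X q)/2*(pd (\<lambda>x. Xa a x $ 2) q b*V q $ 3 + Xa a q $ 2*pd (\<lambda>x. V x $ 3) q b
            + pd (\<lambda>x. Xa a x $ 3) q b*V q $ 2 + Xa a q $ 3*pd (\<lambda>x. V x $ 2) q b)
         + pd (\<lambda>x. fy (X x)) q b/2*Xa a q $ 3*V q $ 3
         + fy (X q)/2*(pd (\<lambda>x. Xa a x $ 3) q b*V q $ 3 + Xa a q $ 3*pd (\<lambda>x. V x $ 3) q b))" for a b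
    unfolding R1f by (rule pd_R1) (rule atoms)+
  have P2: "pd (\<lambda>x. R a x $ 2) q b = -(pd lam q b * Xa a q $ 2 + lam q * pd (\<lambda>x. Xa a x $ 2) q b)
      + (pd (\<lambda>x. fx (X x)) q b/(2*eps)*Xa a q $ 3*V q $ 3
         + fx (X q)/(2*eps)*(pd (\<lambda>x. Xa a x $ 3) q b*V q $ 3 + Xa a q $ 3*pd (\<lambda>x. V x $ 3) q b))" for a b
    unfolding R2f by (rule pd_R2) (rule atoms)+
  have P3: "pd (\<lambda>x. R a x $ 3) q b = -(pd lam q b * Xa a q $ 3 + lam q * pd (\<lambda>x. Xa a x $ 3) q b)" for a b
    unfolding R3f by (rule pd_R3) (rule atoms)+
  have Rq1: "R b q $ 1 = -(lam q * Xa b q $ 1) - (fx (X q)/2*(Xa b q $ 2*V q $ 3 + Xa b q $ 3*V q $ 2)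
     + fy (X q)/2*Xa b q $ 3*V q $ 3)" for b
    using fun_cong[OF R1f[of b], of q] by simp
  have Rq2: "R b q $ 2 = -(lam q * Xa b q $ 2) - (-(fx (X q)/(2*eps))*Xa b q $ 3*V q $ 3)" for b
    using fun_cong[OF R2f[of b], of q] by simp
  have Rq3: "R b q $ 3 = -(lam q * Xa b q $ 3)" for b
    using fun_cong[OF R3f[of b], of q] by simp
  define A where "A = Xa 1 q"
  define B where "B = Xa 2 q"
  define W where "W = V q"
  define l0 where "l0 = lam q"
  define l1 where "l1 = pd lam q 1"
  define l2 where "l2 = pd lam q 2"
  define a where "a = fx (X q)"
  define b where "b = fy (X q)"
  define fxx' where "fxx' = pd fx (X q) 2"
  define fxy' where "fxy' = pd fx (X q) 3"
  define fyy' where "fyy' = pd fy (X q) 3"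
  define J where "J = A$2 * B$3 - A$3 * B$2"
  have Cod1: "l1 * B$1 - l2 * A$1 = -(1/2) * fxx' * W$2 * J"
    using symV[of 1] eps0 unfolding P1 pdV Rq1 Rq2 Rq3 pdFX pdFY symX
    unfolding A_def[symmetric] B_def[symmetric] W_def[symmetric] l0_def[symmetric] l1_def[symmetric]
      l2_def[symmetric] a_def[symmetric] b_def[symmetric] fxx'_def[symmetric] fxy'_def[symmetric]
      fyy'_def[symmetric] J_def
    by (simp add: algebra_simps, (simp add: field_simps)?)
  have Cod2: "l1 * B$2 - l2 * A$2 = (1/(2*eps)) * fxx' * W$3 * J"
    using symV[of 2] eps0 unfolding P2 pdV Rq1 Rq2 Rq3 pdFX pdFY symX
    unfolding A_def[symmetric] B_def[symmetric] W_def[symmetric] l0_def[symmetric] l1_def[symmetric]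
      l2_def[symmetric] a_def[symmetric] b_def[symmetric] fxx'_def[symmetric] fxy'_def[symmetric]
      fyy'_def[symmetric] J_def
    by (simp add: algebra_simps, (simp add: field_simps)?)
  have Cod3: "l1 * B$3 - l2 * A$3 = 0"
    using symV[of 3] eps0 unfolding P3 pdV Rq1 Rq2 Rq3 pdFX pdFY symX
    unfolding A_def[symmetric] B_def[symmetric] W_def[symmetric] l0_def[symmetric] l1_def[symmetric]
      l2_def[symmetric] a_def[symmetric] b_def[symmetric] fxx'_def[symmetric] fxy'_def[symmetric]
      fyy'_def[symmetric] J_def
    by (simp add: algebra_simps, (simp add: field_simps)?)
  define F where "F = fxy f (X q)"
  have ip: "ginner eps f (X q) y z = eps*y$2*z$2 + F*y$3*z$3 + y$1*z$3 + y$3*z$1" for y z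
    unfolding F_def by (rule ginner_expl)
  have linDX: "linear (frechet_derivative X (at q))"
    using linear_frechet_derivative Xd(1) q by blast
  have injDX: "inj (frechet_derivative X (at q))" using immersion q by blast
  have indep2: "x1 = 0 \<and> x2 = 0" if h: "x1 *\<^sub>R A + x2 *\<^sub>R B = 0" for x1 x2
  proof -
    have "frechet_derivative X (at q) (x1 *\<^sub>R axis 1 1 + x2 *\<^sub>R axis 2 1) = frechet_derivative X (at q) 0"
      using h linDX unfolding A_def B_def Xa_def by (simp add: linear_add linear_scale linear_0)
    then have "x1 *\<^sub>R axis 1 1 + x2 *\<^sub>R axis 2 1 = (0::real^2)" using injDX by (meson injD)
    then have "(x1 *\<^sub>R axis 1 1 + x2 *\<^sub>R axis 2 1 :: real^2) $ 1 = 0"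
      "(x1 *\<^sub>R axis 1 1 + x2 *\<^sub>R axis 2 1 :: real^2) $ 2 = 0" by simp_all
    then show ?thesis by (simp add: axis_def)
  qed
  have nA: "ginner eps f (X q) W A = 0" using normal q unfolding W_def A_def Xa_def by blast
  have nB: "ginner eps f (X q) W B = 0" using normal q unfolding W_def B_def Xa_def by blast
  define c where "c = - fxx' / (2 * eps)"
  have lam12: "l1 = c * W$3 * A$3 \<and> l2 = c * W$3 * B$3"
  proof -
    have "(l1 - c * W$3 * A$3) *\<^sub>R B + (-(l2 - c * W$3 * B$3)) *\<^sub>R A = 0"
    proof -
      have "W$3 * (A$3 * B$1 - B$3 * A$1) = eps * W$2 * J"
        using nA nB unfolding ip J_def by algebra
      then show ?thesis
        using Cod1 Cod2 Cod3 eps0 unfolding c_def J_def vec_eq_iff forall_3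
        by (simp add: field_simps) algebra
    qed
    then show ?thesis using indep2 by (metis add.commute diff_eq_eq eq_iff_diff_eq_0 neg_equal_0_iff_equal)
  qed
  define k where "k = 1 / sqrt (2::real)"
  have kk: "k * k = 1/2" unfolding k_def by simp
  have W1: "W$1 = v2 q * (2 - F) * k / 2 + v3 q * (2 + F) * k / 2"
    and W2: "W$2 = v1 q" and W3: "W$3 = v2 q * k - v3 q * k"
    using V_def q unfolding W_def F_def k_def by (simp_all add: fe1_def fe2_def fe3_def)
  have unitq: "eps * (v1 q)^2 + (v2 q)^2 - (v3 q)^2 = delta" using unit q by blast
  have WW: "ginner eps f (X q) W W = delta"
  proof -
    have h: "e*a*a + F*(b*k - d*k)*(b*k - d*k) + (b*(2-F)*k/2 + d*(2+F)*k/2)*(b*k - d*k)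
      + (b*k - d*k)*(b*(2-F)*k/2 + d*(2+F)*k/2) = dl"
      if "k*k = 1/2" "e*a^2 + b^2 - d^2 = dl" for e a b d dl :: real
    proof -
      have "e*a*a + F*(b*k - d*k)*(b*k - d*k) + (b*(2-F)*k/2 + d*(2+F)*k/2)*(b*k - d*k)
        + (b*k - d*k)*(b*(2-F)*k/2 + d*(2+F)*k/2) = e*a*a + (k*k) * (2*b*b - 2*d*d)"
        by (simp add: algebra_simps)
      then show ?thesis using that by (simp add: power2_eq_square)
    qed
    show ?thesis unfolding ip W1 W2 W3 by (rule h[OF kk unitq])
  qed
  have d2: "delta * delta = 1" using delta by auto
  have ipsym: "ginner eps f (X q) y z = ginner eps f (X q) z y" for y z unfolding ip by (simp add: algebra_simps)
  have ipadd: "ginner eps f (X q) y (x1 *\<^sub>R z1 + x2 *\<^sub>R z2 + x3 *\<^sub>R z3)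
     = x1 * ginner eps f (X q) y z1 + x2 * ginner eps f (X q) y z2 + x3 * ginner eps f (X q) y z3" for y x1 x2 x3 z1 z2 z3
    unfolding ip by (simp add: algebra_simps)
  have ipaddL: "ginner eps f (X q) (x1 *\<^sub>R z1 + x2 *\<^sub>R z2) y
     = x1 * ginner eps f (X q) z1 y + x2 * ginner eps f (X q) z2 y" for y x1 x2 z1 z2
    unfolding ip by (simp add: algebra_simps)
  define M :: "real^3^3" where "M = (\<chi> i j. if j = 1 then A$i else if j = 2 then B$i else W$i)"
  have Mv: "M *v x = x$1 *\<^sub>R A + x$2 *\<^sub>R B + x$3 *\<^sub>R W" for x
    unfolding M_def by (simp add: matrix_vector_mult_def vec_eq_iff sum_3 algebra_simps)
  have indep3: "z = 0" if "M *v z = 0" for z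
  proof -
    have h: "z$1 *\<^sub>R A + z$2 *\<^sub>R B + z$3 *\<^sub>R W = 0" using that Mv by simp
    then have "ginner eps f (X q) W (z$1 *\<^sub>R A + z$2 *\<^sub>R B + z$3 *\<^sub>R W) = 0" by (simp add: ip)
    then have "z$3 * delta = 0" using ipadd nA nB WW by simp
    then have z3: "z$3 = 0" using delta by auto
    then have "z$1 = 0 \<and> z$2 = 0" using indep2 h by simp
    then show ?thesis using z3 by (simp add: vec_eq_iff forall_3)
  qed
  have "inj ((*v) M)"
  proof (rule injI)
    fix x y assume "M *v x = M *v y"
    then have "M *v (x - y) = 0" by (simp add: matrix_vector_mult_diff_distrib)
    then have "x - y = 0" by (rule indep3)
    then show "x = y" by simp
  qed
  then have "surj ((*v) M)"
    by (intro linear_injective_imp_surjective) (auto simp: matrix_vector_mul_linear)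
  then have span: "\<exists>x::real^3. e = x$1 *\<^sub>R A + x$2 *\<^sub>R B + x$3 *\<^sub>R W" for e
  proof -
    obtain x where "e = M *v x" using \<open>surj ((*v) M)\<close> by (meson surjD)
    then show ?thesis unfolding Mv by blast
  qed
  define G where "G = indmat eps f X q"
  have pdX: "pd X q a = Xa a q" for a unfolding pd_def Xa_def by simp
  have G11: "G$1$1 = ginner eps f (X q) A A" and G12: "G$1$2 = ginner eps f (X q) A B"
    and G21: "G$2$1 = ginner eps f (X q) A B" and G22: "G$2$2 = ginner eps f (X q) B B"
    unfolding G_def indmat_def pdX A_def B_def using ipsym[of "Xa 2 q" "Xa 1 q"] by auto
  define dd where "dd = G$1$1 * G$2$2 - G$1$2 * G$2$1"
  have dd0: "dd \<noteq> 0"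
  proof -
    have "nondegenerate_at eps f X q" using nondeg q by blast
    then show ?thesis unfolding nondegenerate_at_def G_def[symmetric] dd_def det_2 by auto
  qed
  define Gi where "Gi = matrix_inv G"
  have Gi: "Gi$1$1 = G$2$2 / dd" "Gi$1$2 = - G$1$2 / dd" "Gi$2$1 = - G$2$1 / dd" "Gi$2$2 = G$1$1 / dd"
    unfolding Gi_def inv2[OF dd_def dd0] by simp_all
  have G21sym: "G$2$1 = G$1$2" using G12 G21 by simp
  have dd': "dd = G$1$1 * G$2$2 - G$1$2 * G$1$2" unfolding dd_def G21sym ..
  define s1 where "s1 = Gi$1$1 * l1 + Gi$1$2 * l2"
  define s2 where "s2 = Gi$2$1 * l1 + Gi$2$2 * l2"
  have sg: "sgrad eps f X lam q = s1 *\<^sub>R A + s2 *\<^sub>R B"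
    unfolding sgrad_def G_def[symmetric] Gi_def[symmetric] pdX s1_def s2_def
    by (simp add: sum_2 A_def B_def l1_def l2_def scaleR_add_left)
  have sgA: "ginner eps f (X q) (sgrad eps f X lam q) A = l1"
  proof -
    have "ginner eps f (X q) (sgrad eps f X lam q) A = s1 * G$1$1 + s2 * G$2$1"
      unfolding sg ipaddL G11 G21 ipsym[of B A] ..
    also have "\<dots> = l1" unfolding s1_def s2_def Gi G21sym
      by (rule inv2_app(1)[OF dd' dd0])
    finally show ?thesis .
  qed
  have sgB: "ginner eps f (X q) (sgrad eps f X lam q) B = l2"
  proof -
    have "ginner eps f (X q) (sgrad eps f X lam q) B = s1 * G$1$2 + s2 * G$2$2"
      unfolding sg ipaddL G12 G22 ..
    also have "\<dots> = l2" unfolding s1_def s2_def Gi G21sym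
      by (rule inv2_app(2)[OF dd' dd0])
    finally show ?thesis .
  qed
  have sgW: "ginner eps f (X q) (sgrad eps f X lam q) W = 0"
    unfolding sg ipaddL ipsym[of A W] ipsym[of B W] using nA nB by simp
  have key: "ginner eps f (X q) (sgrad eps f X lam q) e = c * W$3 * (e$3 - delta * W$3 * ginner eps f (X q) W e)" for e
  proof -
    obtain x :: "real^3" where x: "e = x$1 *\<^sub>R A + x$2 *\<^sub>R B + x$3 *\<^sub>R W" using span by blast
    show ?thesis
      unfolding x ipadd sgA sgB sgW nA nB WW using lam12 d2
      by (simp add: algebra_simps)
  qed
  have e2: "eps * eps = 1" using eps by auto
  have c_alt: "c = - fxx' * eps / 2" unfolding c_def using e2 eps0 by (simp add: field_simps)
  have fxxq: "fxx f (X q) = fxx'" unfolding fxx_def fxx'_def fx_def ..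
  have fe2c: "fe2 f (X q) = vector [(2 - F) * k / 2, 0, k]" unfolding fe2_def F_def k_def by (simp add: mult.commute)
  have fe3c: "fe3 f (X q) = vector [(2 + F) * k / 2, 0, - k]" unfolding fe3_def F_def k_def by (simp add: mult.commute)
  have ip1: "ginner eps f (X q) W fe1 = eps * v1 q" unfolding ip fe1_def W2 by simp
  have ip2: "ginner eps f (X q) W (fe2 f (X q)) = v2 q"
  proof -
    have "ginner eps f (X q) W (fe2 f (X q)) = (k*k) * (2 * v2 q)"
      unfolding ip fe2c W1 W2 W3 vector_3 by (simp add: field_simps)
    then show ?thesis unfolding kk by simp
  qed
  have ip3: "ginner eps f (X q) W (fe3 f (X q)) = - v3 q"
  proof -
    have "ginner eps f (X q) W (fe3 f (X q)) = (k*k) * (-2 * v3 q)"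
      unfolding ip fe3c W1 W2 W3 vector_3 by (simp add: field_simps)
    then show ?thesis unfolding kk by simp
  qed
  have f13: "fe1 $ 3 = 0" "fe2 f (X q) $ 3 = k" "fe3 f (X q) $ 3 = - k"
    unfolding fe1_def fe2c fe3c by simp_all
  note fins = fin[OF kk W3 e2 d2 unitq, of fxx']
  show "ginner eps f (X q) (sgrad eps f X lam q) fe1
        = delta * (fxx f (X q) * v1 q * (v2 q - v3 q)^2) / 4
   \<and> ginner eps f (X q) (sgrad eps f X lam q) (fe2 f (X q))
        = delta * (fxx f (X q) * (v3 q - v2 q)) / 4 * ((v1 q)^2 + eps * v3 q * (v2 q - v3 q))
   \<and> ginner eps f (X q) (sgrad eps f X lam q) (fe3 f (X q))
        = delta * (fxx f (X q) * (v2 q - v3 q)) / 4 * ((v1 q)^2 + eps * v2 q * (v2 q - v3 q))"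
    unfolding key fxxq c_alt f13 ip1 ip2 ip3 using fins by simp
qed

end
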